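(* Let $n,m\in\mathbb{N}$. If for $i\in I_{nm}$ there exist $j,j'\in I_n$, $k,k'\in I_m$ and $\gamma,\gamma'\in SL(2,\mathbb{Z})$ such that $\gamma A_jA_k=A_i=\gamma'A_{j'}A_{k'}$, then $j=j'$, $k=k'$ and $\gamma=\gamma'$.
   Context: For $N\in\mathbb{N}$: $I_N=\{[x:y]_N:\gcd(x,y,N)=1\}$, where $[x:y]_N$ is the class of $(x,y)\in\mathbb{Z}^2$ under $(x,y)\sim(x',y')$ iff $x'\equiv kx$, $y'\equiv ky\pmod N$ for some $k$ with $\gcd(k,N)=1$. The map $(c,b)\mapsto[c:d_N(c,b)]_N$ with $d_N(c,b)=\min_{0\le k\le c-1}\{c+b+kN/c:\gcd(c,b+kN/c)=1\}$ is a bijection from $\{(c,b):c\ge1,\ c\mid N,\ 0\le b\le N/c-1,\ \gcd(c,b,N/c)=1\}$ onto $I_N$, and for $i\in I_N$ one sets $A_i=\begin{pmatrix}c&b\\0&N/c\end{pmatrix}$ where $(c,b)$ corresponds to $i$. *)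

theory Defs
  imports "HOL-Analysis.Analysis"
begin

definition proj_class :: "nat \<Rightarrow> int \<times> int \<Rightarrow> (int \<times> int) set" where
  "proj_class N p = {(x', y'). \<exists>k::int. coprime k (int N) \<and>
       x' mod int N = (k * fst p) mod int N \<and> y' mod int N = (k * snd p) mod int N}"

definition I_set :: "nat \<Rightarrow> (int \<times> int) set set" where
  "I_set N = {proj_class N (x, y) | x y. gcd (gcd x y) (int N) = 1}"

definition d_N :: "nat \<Rightarrow> int \<Rightarrow> int \<Rightarrow> int" where
  "d_N N c b = Min {c + b + k * (int N div c) | k. 0 \<le> k \<and> k \<le> c - 1 \<and>
                      gcd c (b + k * (int N div c)) = 1}"

definition param_set :: "nat \<Rightarrow> (int \<times> int) set" where
  "param_set N = {(c, b). c \<ge> 1 \<and> c dvd int N \<and> 0 \<le> b \<and> b \<le> int N div c - 1 \<and>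
                          gcd (gcd c b) (int N div c) = 1}"

definition param_to_I :: "nat \<Rightarrow> int \<times> int \<Rightarrow> (int \<times> int) set" where
  "param_to_I N cb = proj_class N (fst cb, d_N N (fst cb) (snd cb))"

definition A_mat :: "nat \<Rightarrow> (int \<times> int) set \<Rightarrow> int ^ 2 ^ 2" where
  "A_mat N i = (let (c, b) = the_inv_into (param_set N) (param_to_I N) i
                in vector [vector [c, b], vector [0, int N div c]])"

definition SL2Z :: "(int ^ 2 ^ 2) set" where
  "SL2Z = {g. det g = 1}"

end

theory Submission
  imports Defs "HOL-Number_Theory.Cong" "HOL-Computational_Algebra.Primes"
begin

lemma pc_iff: "(a,b) \<in> proj_class N (x,y) \<longleftrightarrow>
   (\<exists>k. coprime k (int N) \<and> [a = k*x] (mod int N) \<and> [b = k*y] (mod int N))"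
  by (simp add: proj_class_def cong_def)

lemma pc_refl: "p \<in> proj_class N p"
proof -
  obtain x y where p: "p = (x,y)" by fastforce
  show ?thesis unfolding p pc_iff by (rule exI[of _ 1]) auto
qed

lemma pc_trans: assumes "q \<in> proj_class N p" "r \<in> proj_class N q" shows "r \<in> proj_class N p"
proof -
  obtain x y where p: "p = (x,y)" by fastforce
  obtain x1 y1 where q: "q = (x1,y1)" by fastforce
  obtain x2 y2 where r: "r = (x2,y2)" by fastforce
  from assms obtain k1 k2 where k1: "coprime k1 (int N)" "[x1 = k1*x] (mod int N)" "[y1 = k1*y] (mod int N)"
    and k2: "coprime k2 (int N)" "[x2 = k2*x1] (mod int N)" "[y2 = k2*y1] (mod int N)"
    unfolding p q r pc_iff by blast
  have "[x2 = (k2*k1)*x] (mod int N)"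
    by (metis (no_types, lifting) cong_scalar_left cong_trans k1(2) k2(2) mult.assoc)
  moreover have "[y2 = (k2*k1)*y] (mod int N)"
    by (metis (no_types, lifting) cong_scalar_left cong_trans k1(3) k2(3) mult.assoc)
  moreover have "coprime (k2*k1) (int N)" using k1 k2 by simp
  ultimately show ?thesis unfolding p r pc_iff by blast
qed

lemma pc_sym: assumes "q \<in> proj_class N p" shows "p \<in> proj_class N q"
proof -
  obtain x y where p: "p = (x,y)" by fastforce
  obtain x1 y1 where q: "q = (x1,y1)" by fastforce
  from assms obtain k1 where k1: "coprime k1 (int N)" "[x1 = k1*x] (mod int N)" "[y1 = k1*y] (mod int N)"
    unfolding p q pc_iff by blast
  obtain k where k: "[k1 * k = 1] (mod int N)" using k1(1) cong_solve_coprime_int by blast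
  have ck: "coprime k (int N)" using k coprime_iff_invertible_int by (metis mult.commute)
  have "[k*x1 = (k*k1)*x] (mod int N)" using k1(2) by (metis cong_scalar_left mult.assoc)
  moreover have "[(k*k1)*x = x] (mod int N)" using k by (metis cong_scalar_right mult.commute mult_1)
  ultimately have 1: "[x = k*x1] (mod int N)" by (meson cong_sym cong_trans)
  have "[k*y1 = (k*k1)*y] (mod int N)" using k1(3) by (metis cong_scalar_left mult.assoc)
  moreover have "[(k*k1)*y = y] (mod int N)" using k by (metis cong_scalar_right mult.commute mult_1)
  ultimately have 2: "[y = k*y1] (mod int N)" by (meson cong_sym cong_trans)
  show ?thesis unfolding p q pc_iff using 1 2 ck by blast
qed

lemma pc_eq: assumes "q \<in> proj_class N p" shows "proj_class N q = proj_class N p"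
  using assms pc_trans pc_sym by blast

lemma exists_coprime_shift:
  fixes c b M :: int
  assumes c1: "c \<ge> 1" and g: "gcd (gcd c b) M = 1"
  shows "\<exists>k. 0 \<le> k \<and> k \<le> c - 1 \<and> gcd c (b + k*M) = 1"
proof -
  define P where "P = {p::int. prime p \<and> p dvd c \<and> \<not> p dvd b}"
  have finP: "finite P"
  proof (rule finite_subset)
    show "P \<subseteq> {0..c}" unfolding P_def using c1
      by (auto simp: prime_ge_0_int zdvd_imp_le)
  qed simp
  define k0 where "k0 = \<Prod>P"
  have cop: "coprime c (b + k0*M)"
  proof (rule ccontr)
    assume nc: "\<not> coprime c (b + k0*M)"
    have "gcd c (b + k0*M) \<noteq> 0" using c1 by simp
    moreover have "\<not> is_unit (gcd c (b + k0*M))" using nc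
      using coprime_iff_gcd_eq_1 is_unit_gcd by blast
    ultimately obtain p where p: "p dvd gcd c (b + k0*M)" "prime p"
      using prime_divisor_exists by blast
    have pc: "p dvd c" and pb: "p dvd b + k0*M" using p by auto
    show False
    proof (cases "p dvd b")
      case True
      hence "p dvd k0*M" using pb by (simp add: dvd_add_right_iff)
      hence "p dvd k0 \<or> p dvd M" using p(2) by (simp add: prime_dvd_mult_iff)
      thus False
      proof
        assume "p dvd k0"
        then obtain q where "q \<in> P" "p dvd q" unfolding k0_def using prime_dvd_prod_iff[OF finP p(2), of id] by auto
        hence "p = q" using p(2) unfolding P_def by (simp add: primes_dvd_imp_eq)
        with \<open>q \<in> P\<close> True show False unfolding P_def by simp
      next
        assume "p dvd M"
        hence "p dvd gcd (gcd c b) M" using pc True by simp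
        with g p(2) show False by (metis not_prime_unit)
      qed
    next
      case False
      hence "p \<in> P" using p(2) pc unfolding P_def by simp
      hence "p dvd k0" unfolding k0_def using finP by (metis dvd_prodI id_apply prod.cong)
      hence "p dvd k0*M" by simp
      hence "p dvd b" using pb by (simp add: dvd_add_left_iff)
      with False show False by simp
    qed
  qed
  define k where "k = k0 mod c"
  have "b + k0*M = (k0 div c * M) * c + (b + k*M)" unfolding k_def
    by (metis (no_types, lifting) add.left_commute distrib_right div_mult_mod_eq mult.assoc mult.commute)
  hence "gcd c (b + k*M) = gcd c (b + k0*M)" by (metis gcd_add_mult)
  moreover have "0 \<le> k" "k \<le> c - 1" unfolding k_def using c1 by auto
  ultimately show ?thesis using cop by (metis coprime_iff_gcd_eq_1)
qed

lemma dN_mem: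
  assumes c1: "c \<ge> 1" and g: "gcd (gcd c b) (int N div c) = 1"
  shows "\<exists>k. 0 \<le> k \<and> k \<le> c - 1 \<and> gcd c (b + k*(int N div c)) = 1 \<and>
             d_N N c b = c + b + k*(int N div c)"
proof -
  define S where "S = {c + b + k * (int N div c) | k. 0 \<le> k \<and> k \<le> c - 1 \<and>
                      gcd c (b + k * (int N div c)) = 1}"
  have memS: "x \<in> S \<longleftrightarrow> (\<exists>k. x = c + b + k * (int N div c) \<and> 0 \<le> k \<and> k \<le> c - 1 \<and>
                      gcd c (b + k * (int N div c)) = 1)" for x
    unfolding S_def by (rule mem_Collect_eq)
  have "S \<subseteq> (\<lambda>k. c + b + k * (int N div c)) ` {0..c-1}"
  proof
    fix x assume "x \<in> S"
    then obtain k where "x = c + b + k * (int N div c)" "0 \<le> k" "k \<le> c - 1" unfolding memS by metis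
    thus "x \<in> (\<lambda>k. c + b + k * (int N div c)) ` {0..c-1}" by (intro rev_image_eqI[of k]) auto
  qed
  hence fin: "finite S" by (rule finite_subset) simp
  obtain k where k: "0 \<le> k" "k \<le> c - 1" "gcd c (b + k*(int N div c)) = 1"
    using exists_coprime_shift[OF c1 g] by metis
  have "c + b + k * (int N div c) \<in> S" unfolding memS using k by metis
  hence "S \<noteq> {}" by (metis empty_iff)
  hence "Min S \<in> S" using fin by (rule Min_in[rotated])
  then obtain k' where k': "Min S = c + b + k' * (int N div c)" "0 \<le> k'" "k' \<le> c - 1"
      "gcd c (b + k' * (int N div c)) = 1" unfolding memS by metis
  moreover have "d_N N c b = Min S" by (simp only: d_N_def S_def)
  ultimately show ?thesis by metis
qed

lemma surj_param:
  assumes N1: "N \<ge> 1" and gxy: "gcd (gcd x y) (int N) = 1"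
  shows "\<exists>cb \<in> param_set N. param_to_I N cb = proj_class N (x,y)"
proof -
  define Ni where "Ni = int N"
  have Ni1: "Ni \<ge> 1" using N1 unfolding Ni_def by simp
  define c where "c = gcd x Ni"
  have "c > 0" unfolding c_def using Ni1 by simp
  hence c1: "c \<ge> 1" by simp
  have cdvd: "c dvd Ni" unfolding c_def by simp
  define M where "M = Ni div c"
  have NcM: "Ni = c * M" unfolding M_def using cdvd by simp
  have "0 < c * M" using NcM Ni1 by simp
  hence "M > 0" using c1 by (simp add: zero_less_mult_iff)
  hence M1: "M \<ge> 1" by simp
  define u where "u = x div c"
  have xcu: "x = c * u" unfolding u_def c_def by simp
  have "c * gcd u M = gcd (c * u) (c * M)" using c1 gcd_mult_distrib_int[of c u M] by simp
  also have "gcd (c * u) (c * M) = c" by (simp only: xcu[symmetric] NcM[symmetric] c_def[symmetric])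
  finally have "c * gcd u M = c * 1" by simp
  hence cuM: "coprime u M" using c1 by (simp add: coprime_iff_gcd_eq_1)
  obtain vi where vi: "[u * vi = 1] (mod M)" using cuM cong_solve_coprime_int by blast
  have cvM: "coprime vi M" using vi coprime_iff_invertible_int by (metis mult.commute)
  have "gcd c y = gcd x (gcd Ni y)" unfolding c_def by (rule gcd.assoc)
  also have "\<dots> = gcd x (gcd y Ni)" by (simp only: gcd.commute[of Ni y])
  also have "\<dots> = gcd (gcd x y) Ni" by (rule gcd.assoc[symmetric])
  finally have "gcd c y = gcd (gcd x y) Ni" .
  hence cyc: "coprime c y" using gxy Ni_def by (simp add: coprime_iff_gcd_eq_1)
  define b where "b = (vi * y - c) mod M"
  have b0: "0 \<le> b" and bM: "b \<le> M - 1" unfolding b_def using M1 by auto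
  have bq: "vi * y - c = b + M * ((vi * y - c) div M)" unfolding b_def by simp
  have gb: "gcd (gcd c b) M = 1"
  proof -
    define g where "g = gcd (gcd c b) M"
    have gc: "g dvd c" unfolding g_def by (meson gcd_dvd1 dvd_trans)
    have gb': "g dvd b" unfolding g_def by (meson gcd_dvd1 gcd_dvd2 dvd_trans)
    have gM: "g dvd M" unfolding g_def by (rule gcd_dvd2)
    have "g dvd vi * y - c" using bq gb' gM by (metis dvd_add dvd_mult2)
    hence "g dvd (vi * y - c) + c" using gc by (rule dvd_add)
    hence "g dvd vi * y" by simp
    moreover have "coprime g (vi * y)"
    proof -
      have "coprime M vi" using cvM by (simp add: coprime_commute)
      have 1: "coprime g y" using coprime_divisors[OF gc dvd_refl cyc] .
      have 2: "coprime g vi" using coprime_divisors[OF gM dvd_refl \<open>coprime M vi\<close>] .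
      show ?thesis using 1 2 by simp
    qed
    ultimately have "is_unit g" by (metis coprime_absorb_left  dvd_refl)
    thus ?thesis unfolding g_def by simp
  qed
  have pset: "(c,b) \<in> param_set N" unfolding param_set_def using c1 cdvd b0 bM gb
    by (auto simp: Ni_def M_def)
  define d where "d = d_N N c b"
  obtain k0 where k0: "gcd c (b + k0 * M) = 1" "d = c + b + k0 * M"
    using dN_mem[OF c1, of b N] gb unfolding d_def M_def Ni_def by metis
  have "gcd c d = gcd c (b + k0 * M)" unfolding k0(2)
    by (metis add.assoc add.commute gcd_add_mult mult_1)
  hence cdc: "coprime c d" using k0(1) by (simp add: coprime_iff_gcd_eq_1)
  define s where "s = k0 - (vi * y - c) div M"
  have ds: "d = vi * y + s * M" unfolding s_def k0(2) using bq by (simp add: algebra_simps)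
  obtain w where w: "[y * w = 1] (mod c)" using cyc cong_solve_coprime_int
    by (metis coprime_commute)
  define K where "K = vi + s * w * M"
  have cx: "[K * x = c] (mod Ni)"
  proof -
    have "M dvd u * vi - 1" using vi by (simp add: cong_iff_dvd_diff)
    hence "c * M dvd c*(u * vi - 1)" by simp
    moreover have "K * x - c = c*(u * vi - 1) + (s * w * u) * (c * M)" unfolding K_def xcu
      by (simp add: algebra_simps)
    ultimately have "c * M dvd K * x - c" by (metis dvd_add dvd_triv_right)
    thus ?thesis unfolding NcM by (simp add: cong_iff_dvd_diff)
  qed
  have cy: "[K * y = d] (mod Ni)"
  proof -
    have "c dvd y * w - 1" using w by (simp add: cong_iff_dvd_diff)
    hence "c * M dvd (y * w - 1)*(s * M)" by (metis mult_dvd_mono dvd_triv_right mult.commute)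
    moreover have "K * y - d = (y * w - 1)*(s * M)" unfolding K_def ds by (simp add: algebra_simps)
    ultimately show ?thesis unfolding NcM by (simp add: cong_iff_dvd_diff)
  qed
  have cKN: "coprime K Ni"
  proof -
    have "[K * u = 1] (mod M)"
    proof -
      have e: "K * u - 1 = (u * vi - 1) + (s * w * u)*M" unfolding K_def by (simp add: algebra_simps)
      have "M dvd u * vi - 1" using vi by (simp add: cong_iff_dvd_diff)
      hence "M dvd (u * vi - 1) + (s * w * u)*M" by (rule dvd_add) simp
      hence "M dvd K * u - 1" by (simp only: e)
      thus ?thesis by (simp add: cong_iff_dvd_diff)
    qed
    hence cKM: "coprime K M" using coprime_iff_invertible_int by blast
    have cKc: "coprime K c"
    proof (rule coprimeI)
      fix g assume gK: "g dvd K" and gc: "g dvd c"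
      have "Ni dvd K * y - d" using cy by (simp add: cong_iff_dvd_diff)
      hence "c dvd K * y - d" by (rule dvd_trans[OF cdvd])
      hence "g dvd K * y - d" by (rule dvd_trans[OF gc])
      moreover have "g dvd K * y" using gK by simp
      ultimately have "g dvd K * y - (K * y - d)" by (metis dvd_diff)
      hence "g dvd d" by simp
      with gc cdc show "is_unit g" by (meson coprime_common_divisor)
    qed
    show ?thesis using cKM cKc NcM by simp
  qed
  have "(c,d) \<in> proj_class N (x,y)" unfolding pc_iff Ni_def[symmetric]
    using cKN cong_sym[OF cx] cong_sym[OF cy] by (intro exI[of _ K] conjI)
  hence "proj_class N (c,d) = proj_class N (x,y)" by (rule pc_eq)
  hence "param_to_I N (c,b) = proj_class N (x,y)" unfolding param_to_I_def d_def by simp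
  thus ?thesis using pset by (intro bexI)
qed

lemma small_dvd_eq:
  fixes M x y :: int
  assumes "M dvd x - y" "0 \<le> x" "x \<le> M - 1" "0 \<le> y" "y \<le> M - 1"
  shows "x = y"
proof (rule ccontr)
  assume "x \<noteq> y"
  hence "x - y \<noteq> 0" by simp
  hence "\<bar>M\<bar> \<le> \<bar>x - y\<bar>" using dvd_imp_le_int assms(1) by blast
  thus False using assms(2-5) by linarith
qed

lemma inj_param:
  assumes N1: "N \<ge> 1"
  shows "inj_on (param_to_I N) (param_set N)"
proof (rule inj_onI)
  fix p q assume p: "p \<in> param_set N" and q: "q \<in> param_set N"
    and e: "param_to_I N p = param_to_I N q"
  obtain c b where pcb: "p = (c,b)" by fastforce
  obtain c' b' where qcb: "q = (c',b')" by fastforce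
  define Ni where "Ni = int N"
  have P: "c \<ge> 1" "c dvd Ni" "0 \<le> b" "b \<le> Ni div c - 1" "gcd (gcd c b) (Ni div c) = 1"
    using p unfolding pcb param_set_def Ni_def by auto
  have Q: "c' \<ge> 1" "c' dvd Ni" "0 \<le> b'" "b' \<le> Ni div c' - 1" "gcd (gcd c' b') (Ni div c') = 1"
    using q unfolding qcb param_set_def Ni_def by auto
  define d where "d = d_N N c b"
  define d' where "d' = d_N N c' b'"
  have "(c', d') \<in> proj_class N (c', d')" by (rule pc_refl)
  moreover have "proj_class N (c, d) = proj_class N (c', d')"
    using e unfolding pcb qcb param_to_I_def d_def d'_def by simp
  ultimately have "(c', d') \<in> proj_class N (c, d)" by simp
  then obtain k where k: "coprime k Ni" "[c' = k * c] (mod Ni)" "[d' = k * d] (mod Ni)"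
    unfolding pc_iff Ni_def by blast
  have "gcd c' Ni = gcd (k * c) Ni" by (rule cong_gcd_eq[OF k(2)])
  also have "\<dots> = gcd c Ni" using k(1) by (simp add: gcd_mult_left_left_cancel coprime_commute)
  also have "\<dots> = c" using P(1,2) by simp
  finally have cc: "c' = c" using Q(1,2) by simp
  define M where "M = Ni div c"
  have NcM: "Ni = c * M" unfolding M_def using P(2) by simp
  have "Ni dvd c - k * c" using k(2) cc by (simp add: cong_iff_dvd_diff)
  hence "c * M dvd c * (1 - k)" unfolding NcM by (simp add: algebra_simps)
  hence Mk: "M dvd 1 - k" using P(1) by simp
  obtain e where ed: "d = c + b + e * M" using dN_mem[OF P(1), of b N] P(5) unfolding d_def M_def Ni_def by metis
  obtain e' where ed': "d' = c + b' + e' * M" using dN_mem[OF Q(1), of b' N] Q(5) cc unfolding d'_def M_def Ni_def by metis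
  have "Ni dvd d' - k * d" using k(3) by (simp add: cong_iff_dvd_diff)
  hence "M dvd d' - k * d" unfolding NcM by (rule dvd_mult_right)
  moreover have "M dvd (1 - k) * d" using Mk by simp
  ultimately have "M dvd (d' - k * d) - (1 - k) * d" by (rule dvd_diff)
  moreover have "(d' - k * d) - (1 - k) * d = d' - d" by (simp add: algebra_simps)
  moreover have "d' - d = (b' - b) + (e' - e) * M" using ed ed' by (simp add: algebra_simps)
  ultimately have "M dvd (b' - b) + (e' - e) * M" by simp
  hence "M dvd b' - b" by (simp add: dvd_add_left_iff)
  hence "b' = b" using small_dvd_eq P(3,4) Q(3,4) cc unfolding M_def by metis
  thus "p = q" unfolding pcb qcb using cc by simp
qed

lemma A_mat_char:
  assumes N1: "N \<ge> 1" and j: "j \<in> I_set N"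
  shows "\<exists>c b. (c,b) \<in> param_set N \<and> param_to_I N (c,b) = j \<and>
           A_mat N j = vector [vector [c, b], vector [0, int N div c]]"
proof -
  from j obtain x y where jx: "j = proj_class N (x,y)" "gcd (gcd x y) (int N) = 1"
    unfolding I_set_def mem_Collect_eq by metis
  obtain cb where cb: "cb \<in> param_set N" "param_to_I N cb = j"
    using surj_param[OF N1 jx(2)] jx(1) by metis
  obtain c b where cbe: "cb = (c,b)" by fastforce
  have "the_inv_into (param_set N) (param_to_I N) j = (c,b)"
    using the_inv_into_f_f[OF inj_param[OF N1] cb(1)] cb(2) cbe by simp
  hence "A_mat N j = vector [vector [c, b], vector [0, int N div c]]"
    unfolding A_mat_def by simp
  thus ?thesis using cb cbe by (intro exI[of _ c] exI[of _ b]) simp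
qed

definition mat2 :: "int \<Rightarrow> int \<Rightarrow> int \<Rightarrow> int \<Rightarrow> int^2^2" where
  "mat2 a b c d = vector [vector [a, b], vector [c, d]]"

lemma mat2_nth: "mat2 a b c d $ 1 $ 1 = a" "mat2 a b c d $ 1 $ 2 = b"
  "mat2 a b c d $ 2 $ 1 = c" "mat2 a b c d $ 2 $ 2 = d"
  by (simp_all add: mat2_def)

lemma mat2_eq_iff: "mat2 a b c d = mat2 a' b' c' d' \<longleftrightarrow> a = a' \<and> b = b' \<and> c = c' \<and> d = d'"
  by (metis mat2_nth)

lemma mat2_of: "(A::int^2^2) = mat2 (A$1$1) (A$1$2) (A$2$1) (A$2$2)"
  by (simp add: vec_eq_iff forall_2 mat2_def)

lemma mat2_mult: "mat2 a b c d ** mat2 e f g h = mat2 (a * e + b * g) (a * f + b * h) (c * e + d * g) (c * f + d * h)"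
  by (simp add: vec_eq_iff forall_2 mat2_def matrix_matrix_mult_def sum_2)

lemma det_mat2: "det (mat2 a b c d) = a * d - b * c"
  by (simp add: det_2 mat2_def)

lemma gamma_shape:
  fixes a1 a2 a3 a4 c1 b1 M1 c2 b2 M2 c b M :: int
  assumes "a1 * a4 - a2 * a3 = 1" "c1 \<ge> 1" "c2 \<ge> 1" "c \<ge> 1"
    and "mat2 a1 a2 a3 a4 ** mat2 c1 b1 0 M1 ** mat2 c2 b2 0 M2 = mat2 c b 0 M"
  shows "a3 = 0 \<and> a1 = 1 \<and> a4 = 1 \<and> c = c1 * c2 \<and> M = M1 * M2 \<and>
         b = c1 * b2 + b1 * M2 + a2 * (M1 * M2)"
proof -
  have e: "a1 * c1 * c2 = c" "a1 * c1 * b2 + (a1 * b1 + a2 * M1) * M2 = b"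
       "a3 * c1 * c2 = 0" "a3 * c1 * b2 + (a3 * b1 + a4 * M1) * M2 = M"
    using assms(5) unfolding mat2_mult mat2_eq_iff by (simp_all add: algebra_simps)
  have a3: "a3 = 0" using e(3) assms(2,3) by simp
  hence "a1 * a4 = 1" using assms(1) by simp
  hence "(a1 = 1 \<and> a4 = 1) \<or> (a1 = -1 \<and> a4 = -1)" by (simp add: zmult_eq_1_iff)
  moreover have "a1 \<noteq> -1"
  proof
    assume "a1 = -1"
    hence "c = - (c1 * c2)" using e(1) by simp
    moreover have "c1 * c2 \<ge> 1" using mult_mono[of 1 c1 1 c2] assms(2,3) by simp
    ultimately show False using assms(4) by linarith
  qed
  ultimately have a14: "a1 = 1" "a4 = 1" by auto
  have "c = c1 * c2" using e(1) a14 by simp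
  moreover have "M = M1 * M2" using e(4) a3 a14 by simp
  moreover have "b = c1 * b2 + b1 * M2 + a2 * (M1 * M2)" using e(2) a14 by (simp add: algebra_simps)
  ultimately show ?thesis using a3 a14 by blast
qed

lemma decomp:
  fixes c1 b1 M1 c2 b2 M2 c1' b1' M1' c2' b2' M2' b g g' :: int
  assumes pos: "c1 \<ge> 1" "c2 \<ge> 1" "c1' \<ge> 1" "c2' \<ge> 1"
    and rng: "0 \<le> b1" "b1 \<le> M1 - 1" "0 \<le> b2" "b2 \<le> M2 - 1"
      "0 \<le> b1'" "b1' \<le> M1' - 1" "0 \<le> b2'" "b2' \<le> M2' - 1"
    and eqs: "c1 * M1 = c1' * M1'" "c2 * M2 = c2' * M2'" "c1 * c2 = c1' * c2'" "M1 * M2 = M1' * M2'"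
    and gcd1: "gcd (gcd (c1 * c2) b) (M1 * M2) = 1"
    and bb: "b = c1 * b2 + b1 * M2 + g * (M1 * M2)" "b = c1' * b2' + b1' * M2' + g' * (M1' * M2')"
  shows "c1 = c1' \<and> b1 = b1' \<and> c2 = c2' \<and> b2 = b2' \<and> g = g'"
proof -
  have M2p: "M2 \<ge> 1" "M2' \<ge> 1" "M1 \<ge> 1" using rng by auto
  have cop1: "coprime c1 M2"
  proof (rule coprimeI)
    fix t assume t1: "t dvd c1" and t2: "t dvd M2"
    have "t dvd c1 * c2" using t1 by simp
    moreover have "t dvd b" unfolding bb(1) using t1 t2 by simp
    moreover have "t dvd M1 * M2" using t2 by simp
    ultimately have "t dvd gcd (gcd (c1 * c2) b) (M1 * M2)" by simp
    thus "is_unit t" using gcd1 by simp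
  qed
  have cop2: "coprime c1' M2'"
  proof (rule coprimeI)
    fix t assume t1: "t dvd c1'" and t2: "t dvd M2'"
    have "t dvd c1' * c2'" using t1 by simp
    moreover have "t dvd b" unfolding bb(2) using t1 t2 by simp
    moreover have "t dvd M1' * M2'" using t2 by simp
    ultimately have "t dvd gcd (gcd (c1 * c2) b) (M1 * M2)" using eqs by simp
    thus "is_unit t" using gcd1 by simp
  qed
  have "(c1 * M2') * (c2 * M2) = (c1 * c2) * (M2 * M2')" by (simp add: algebra_simps)
  also have "\<dots> = (c1' * c2') * (M2 * M2')" using eqs(3) by simp
  also have "\<dots> = (c1' * M2) * (c2' * M2')" by (simp add: algebra_simps)
  also have "\<dots> = (c1' * M2) * (c2 * M2)" using eqs(2) by simp
  finally have "(c1 * M2') * (c2 * M2) = (c1' * M2) * (c2 * M2)" .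
  moreover have "c2 * M2 \<noteq> 0" using pos(2) M2p(1) by simp
  ultimately have cm: "c1 * M2' = c1' * M2" by simp
  have "c1 dvd c1' * M2" using cm[symmetric] by (metis dvd_triv_left)
  hence d1: "c1 dvd c1'" using cop1 by (simp add: coprime_dvd_mult_left_iff)
  have "c1' dvd c1 * M2'" using cm by (metis dvd_triv_left)
  hence d2: "c1' dvd c1" using cop2 by (simp add: coprime_dvd_mult_left_iff)
  have c1e: "c1 = c1'" using zdvd_antisym_nonneg d1 d2 pos by simp
  have c2e: "c2 = c2'" using eqs(3) c1e pos(1) by simp
  have M2e: "M2 = M2'" using cm c1e pos(1) by simp
  have M1e: "M1 = M1'" using eqs(1) c1e pos(1) by simp
  have "c1 * b2 + b1 * M2 + g * (M1 * M2) = c1 * b2' + b1' * M2 + g' * (M1 * M2)"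
    using bb c1e M2e M1e by simp
  hence e1: "c1 * (b2 - b2') = M2 * ((b1' - b1) + (g' - g) * M1)" by (simp add: algebra_simps)
  hence "M2 dvd c1 * (b2 - b2')" by simp
  hence "M2 dvd b2 - b2'" using cop1 by (metis coprime_commute coprime_dvd_mult_right_iff)
  hence b2e: "b2 = b2'" using small_dvd_eq rng M2e by metis
  have "M2 * ((b1' - b1) + (g' - g) * M1) = 0" using e1 b2e by simp
  hence e2: "(b1' - b1) + (g' - g) * M1 = 0" using M2p by simp
  hence "M1 dvd b1' - b1" by (metis add.commute add_diff_cancel_left' diff_zero dvd_diff dvd_triv_right dvd_0_right)
  hence b1e: "b1' = b1" using small_dvd_eq rng M1e by metis
  hence "(g' - g) * M1 = 0" using e2 by simp
  hence "g = g'" using M2p by simp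
  thus ?thesis using c1e c2e b1e b2e by simp
qed

lemma param_facts:
  assumes "(c,b) \<in> param_set N"
  shows "c \<ge> 1" "c * (int N div c) = int N" "0 \<le> b" "b \<le> int N div c - 1"
    "gcd (gcd c b) (int N div c) = 1"
  using assms unfolding param_set_def by auto

lemma A_mat_char2:
  assumes "N \<ge> 1" "j \<in> I_set N"
  obtains c b where "(c,b) \<in> param_set N" "param_to_I N (c,b) = j"
    "A_mat N j = mat2 c b 0 (int N div c)"
  using A_mat_char[OF assms] unfolding mat2_def by metis

theorem mainTheorem14:
  fixes n m :: nat and i j j' k k' :: "(int \<times> int) set" and \<gamma> \<gamma>' :: "int ^ 2 ^ 2"
  assumes "n \<ge> 1" and "m \<ge> 1"
    and "i \<in> I_set (n * m)"
    and "j \<in> I_set n" and "j' \<in> I_set n"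
    and "k \<in> I_set m" and "k' \<in> I_set m"
    and "\<gamma> \<in> SL2Z" and "\<gamma>' \<in> SL2Z"
    and "\<gamma> ** A_mat n j ** A_mat m k = A_mat (n * m) i"
    and "A_mat (n * m) i = \<gamma>' ** A_mat n j' ** A_mat m k'"
  shows "j = j' \<and> k = k' \<and> \<gamma> = \<gamma>'"
proof -
  have nm1: "n * m \<ge> 1" using assms(1,2) by simp
  obtain c1 b1 where J: "(c1,b1) \<in> param_set n" "param_to_I n (c1,b1) = j"
    "A_mat n j = mat2 c1 b1 0 (int n div c1)" using A_mat_char2[OF assms(1,4)] by blast
  obtain c1' b1' where J': "(c1',b1') \<in> param_set n" "param_to_I n (c1',b1') = j'"
    "A_mat n j' = mat2 c1' b1' 0 (int n div c1')" using A_mat_char2[OF assms(1,5)] by blast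
  obtain c2 b2 where K: "(c2,b2) \<in> param_set m" "param_to_I m (c2,b2) = k"
    "A_mat m k = mat2 c2 b2 0 (int m div c2)" using A_mat_char2[OF assms(2,6)] by blast
  obtain c2' b2' where K': "(c2',b2') \<in> param_set m" "param_to_I m (c2',b2') = k'"
    "A_mat m k' = mat2 c2' b2' 0 (int m div c2')" using A_mat_char2[OF assms(2,7)] by blast
  obtain c b where I: "(c,b) \<in> param_set (n * m)" "param_to_I (n * m) (c,b) = i"
    "A_mat (n * m) i = mat2 c b 0 (int (n * m) div c)" using A_mat_char2[OF nm1 assms(3)] by blast
  define M1 where "M1 = int n div c1"
  define M1' where "M1' = int n div c1'"
  define M2 where "M2 = int m div c2"
  define M2' where "M2' = int m div c2'"
  define M where "M = int (n * m) div c"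
  note PJ = param_facts[OF J(1), folded M1_def]
  note PJ' = param_facts[OF J'(1), folded M1'_def]
  note PK = param_facts[OF K(1), folded M2_def]
  note PK' = param_facts[OF K'(1), folded M2'_def]
  note PI = param_facts[OF I(1), folded M_def]
  obtain a1 a2 a3 a4 where g: "\<gamma> = mat2 a1 a2 a3 a4" using mat2_of by metis
  obtain a1' a2' a3' a4' where g': "\<gamma>' = mat2 a1' a2' a3' a4'" using mat2_of by metis
  have dg: "a1 * a4 - a2 * a3 = 1" using assms(8) unfolding SL2Z_def g by (simp add: det_mat2)
  have dg': "a1' * a4' - a2' * a3' = 1" using assms(9) unfolding SL2Z_def g' by (simp add: det_mat2)
  have E1: "mat2 a1 a2 a3 a4 ** mat2 c1 b1 0 M1 ** mat2 c2 b2 0 M2 = mat2 c b 0 M"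
    using assms(10) unfolding g J(3) K(3) I(3) M1_def M2_def M_def .
  have E2: "mat2 a1' a2' a3' a4' ** mat2 c1' b1' 0 M1' ** mat2 c2' b2' 0 M2' = mat2 c b 0 M"
    using assms(11)[symmetric] unfolding g' J'(3) K'(3) I(3) M1'_def M2'_def M_def .
  note S1 = gamma_shape[OF dg PJ(1) PK(1) PI(1) E1]
  note S2 = gamma_shape[OF dg' PJ'(1) PK'(1) PI(1) E2]
  have "c1 * M1 = c1' * M1'" using PJ(2) PJ'(2) by simp
  moreover have "c2 * M2 = c2' * M2'" using PK(2) PK'(2) by simp
  moreover have "c1 * c2 = c1' * c2'" using S1 S2 by simp
  moreover have "M1 * M2 = M1' * M2'" using S1 S2 by simp
  moreover have "gcd (gcd (c1 * c2) b) (M1 * M2) = 1" using PI(5) S1 by simp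
  moreover have "b = c1 * b2 + b1 * M2 + a2 * (M1 * M2)" using S1 by simp
  moreover have "b = c1' * b2' + b1' * M2' + a2' * (M1' * M2')" using S2 by simp
  ultimately have D: "c1 = c1' \<and> b1 = b1' \<and> c2 = c2' \<and> b2 = b2' \<and> a2 = a2'"
    by (rule decomp[OF PJ(1) PK(1) PJ'(1) PK'(1) PJ(3,4) PK(3,4) PJ'(3,4) PK'(3,4)])
  have "j = j'" using J(2) J'(2) D by simp
  moreover have "k = k'" using K(2) K'(2) D by simp
  moreover have "\<gamma> = \<gamma>'" unfolding g g' using S1 S2 D by simp
  ultimately show ?thesis by simp
qed

end
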